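(* Let $k$ be a field of characteristic $0$, $R=k[x_1,\dots,x_n]$ acting on $S=k[X_1,\dots,X_n]$ by differentiation ($x_i\circ F=\partial F/\partial X_i$), and let $\ell=x_1+\dots+x_n$. For any monomial $M\in S$ and any integer $d\ge 0$, the Artinian Gorenstein algebra $R/\operatorname{Ann}(\ell^d\circ M)$ has the strong Lefschetz property. In particular, for every elementary symmetric polynomial $e_d(X_1,\dots,X_n)$, $0\le d\le n$, the algebra $R/\operatorname{Ann}(e_d(X_1,\dots,X_n))$ has the strong Lefschetz property.
   Context: For $B\subseteq S$, $\operatorname{Ann}(B)=\{f\in R\mid f\circ b=0\ \forall b\in B\}$. For a homogeneous $F\in S$, $R/\operatorname{Ann}(F)$ is the Artinian Gorenstein algebra with dual generator $F$. A graded Artinian $k$-algebra $A$ has the strong Lefschetz property if there exists $\ell\in A_1$ such that for all $i$ and $j\ge0$ the multiplication map $\cdot\ell^j\colon A_i\to A_{i+j}$ is injective or surjective. *)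

theory Defs
  imports Main "HOL-Library.Poly_Mapping"
begin

text \<open>Polynomials over a field 'a in the variables indexed by a finite type 'n
  (so n = CARD('n) is an arbitrary fixed number of variables).
  A monomial is an exponent vector of type of finitely supported maps 'n to nat; a polynomial is a
  finitely supported map from monomials to coefficients (product = convolution).
  The same type serves both as R = k[x_1..x_n] and as S = k[X_1..X_n].\<close>

type_synonym ('n, 'a) mpoly = "('n \<Rightarrow>\<^sub>0 nat) \<Rightarrow>\<^sub>0 'a"

definition mdeg :: "('n::finite \<Rightarrow>\<^sub>0 nat) \<Rightarrow> nat" where
  "mdeg m = (\<Sum>i\<in>UNIV. Poly_Mapping.lookup m i)"

definition var :: "'n \<Rightarrow> ('n, 'a::{zero,one}) mpoly" where
  "var i = Poly_Mapping.single (Poly_Mapping.single i 1) 1"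

definition monom :: "('n \<Rightarrow>\<^sub>0 nat) \<Rightarrow> ('n, 'a::{zero,one}) mpoly" where
  "monom b = Poly_Mapping.single b 1"

text \<open>Homogeneous of degree d (the zero polynomial is homogeneous of every degree).\<close>
definition homog :: "nat \<Rightarrow> ('n::finite, 'a::zero) mpoly \<Rightarrow> bool" where
  "homog d f \<longleftrightarrow> (\<forall>m\<in>Poly_Mapping.keys f. mdeg m = d)"

text \<open>Action of R on S by differentiation, x_i \<circ> F = dF/dX_i, extended to all of R.
  On monomials: x^a \<circ> X^b = (\<Prod>i. b_i!/(b_i-a_i)!) X^(b-a) if a \<le> b componentwise,
  and 0 otherwise; this is exactly the iterated partial derivative
  (\<partial>/\<partial>X_1)^(a_1) ... (\<partial>/\<partial>X_n)^(a_n) X^b.\<close>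
definition act :: "('n::finite, 'a::field) mpoly \<Rightarrow> ('n, 'a) mpoly \<Rightarrow> ('n, 'a) mpoly" where
  "act f F = (\<Sum>a\<in>Poly_Mapping.keys f. \<Sum>b\<in>Poly_Mapping.keys F.
      if (\<forall>i. Poly_Mapping.lookup a i \<le> Poly_Mapping.lookup b i)
      then Poly_Mapping.single (b - a)
             (Poly_Mapping.lookup f a * Poly_Mapping.lookup F b *
              of_nat (\<Prod>i\<in>UNIV. fact (Poly_Mapping.lookup b i) div fact (Poly_Mapping.lookup b i - Poly_Mapping.lookup a i)))
      else 0)"

definition Ann :: "('n::finite, 'a::field) mpoly \<Rightarrow> ('n, 'a) mpoly set" where
  "Ann F = {f. act f F = 0}"

text \<open>Strong Lefschetz property of the graded quotient A = R/I, for a homogeneous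
  ideal I.  The graded piece A_i is R_i/(I \<inter> R_i); an element of A_1 is the class
  of a linear form L.  Multiplication by L^j : A_i \<rightarrow> A_(i+j) is
  injective: f \<in> R_i and L^j f \<in> I imply f \<in> I;
  surjective: every g \<in> R_(i+j) is congruent mod I to L^j f for some f \<in> R_i.\<close>
definition SLP_quot :: "('n::finite, 'a::field) mpoly set \<Rightarrow> bool" where
  "SLP_quot I \<longleftrightarrow> (\<exists>L. homog 1 L \<and>
     (\<forall>i j. (\<forall>f. homog i f \<and> L ^ j * f \<in> I \<longrightarrow> f \<in> I) \<or>
            (\<forall>g. homog (i + j) g \<longrightarrow> (\<exists>f. homog i f \<and> g - L ^ j * f \<in> I))))"

definition elem_sym :: "nat \<Rightarrow> ('n::finite, 'a::field) mpoly" where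
  "elem_sym d = (\<Sum>T\<in>{T. card T = d}. monom (\<Sum>i\<in>T. Poly_Mapping.single i 1))"

end

theory Submission
  imports Defs
begin


abbreviation lk where "lk \<equiv> Poly_Mapping.lookup"
abbreviation ks where "ks \<equiv> Poly_Mapping.keys"
abbreviation sg where "sg \<equiv> Poly_Mapping.single"

definition ffp :: "('n::finite \<Rightarrow>\<^sub>0 nat) \<Rightarrow> ('n \<Rightarrow>\<^sub>0 nat) \<Rightarrow> nat" where
  "ffp b a = (\<Prod>i\<in>UNIV. fact (lk b i) div fact (lk b i - lk a i))"

lemma le_minus_iff:
  fixes a b c :: "'n \<Rightarrow>\<^sub>0 nat"
  shows "((\<forall>i. lk a i \<le> lk b i) \<and> b - a = c) \<longleftrightarrow> b = c + a"
proof
  assume h: "(\<forall>i. lk a i \<le> lk b i) \<and> b - a = c"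
  show "b = c + a"
    by (rule poly_mapping_eqI) (use h in \<open>auto simp: lookup_add lookup_minus\<close>)
next
  assume h: "b = c + a"
  show "(\<forall>i. lk a i \<le> lk b i) \<and> b - a = c"
    using h by (auto simp: lookup_add intro!: poly_mapping_eqI simp: lookup_minus)
qed

lemma lookup_act:
  fixes f G :: "('n::finite, 'a::field) mpoly"
  shows "lk (act f G) c = (\<Sum>a\<in>ks f. lk f a * lk G (c + a) * of_nat (ffp (c + a) a))"
proof -
  have inner: "(\<Sum>b\<in>ks G. lk (if (\<forall>i. lk a i \<le> lk b i)
      then sg (b - a)
             (lk f a * lk G b *
              of_nat (\<Prod>i\<in>UNIV. fact (lk b i) div fact (lk b i - lk a i)))
      else 0) c) = lk f a * lk G (c + a) * of_nat (ffp (c + a) a)" for a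
  proof -
    have "(\<Sum>b\<in>ks G. lk (if (\<forall>i. lk a i \<le> lk b i)
      then sg (b - a)
             (lk f a * lk G b *
              of_nat (\<Prod>i\<in>UNIV. fact (lk b i) div fact (lk b i - lk a i)))
      else 0) c) = (\<Sum>b\<in>ks G. if b = c + a then lk f a * lk G b * of_nat (ffp b a) else 0)"
    proof (rule sum.cong[OF refl])
      fix b
      show "lk (if (\<forall>i. lk a i \<le> lk b i)
      then sg (b - a)
             (lk f a * lk G b *
              of_nat (\<Prod>i\<in>UNIV. fact (lk b i) div fact (lk b i - lk a i)))
      else 0) c = (if b = c + a then lk f a * lk G b * of_nat (ffp b a) else 0)"
        using le_minus_iff[of a b c] by (auto simp: lookup_single ffp_def)
    qed
    also have "\<dots> = lk f a * lk G (c + a) * of_nat (ffp (c + a) a)"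
      by (simp add: sum.delta' in_keys_iff)
    finally show ?thesis .
  qed
  show ?thesis
    unfolding act_def lookup_sum using inner by simp
qed


lemma lookup_act_superset:
  fixes f G :: "('n::finite, 'a::field) mpoly"
  assumes "finite K" "ks f \<subseteq> K"
  shows "lk (act f G) c = (\<Sum>a\<in>K. lk f a * lk G (c + a) * of_nat (ffp (c + a) a))"
  unfolding lookup_act
  by (rule sum.mono_neutral_left) (use assms in \<open>auto simp: in_keys_iff\<close>)

lemma lookup_act_single:
  fixes G :: "('n::finite, 'a::field) mpoly"
  shows "lk (act (sg a u) G) c = u * lk G (c + a) * of_nat (ffp (c + a) a)"
  by (subst lookup_act_superset[where K="{a}"]) (auto simp: lookup_single)

lemma act_add_left:
  fixes f g G :: "('n::finite, 'a::field) mpoly"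
  shows "act (f + g) G = act f G + act g G"
proof (rule poly_mapping_eqI)
  fix c
  have K: "finite (ks f \<union> ks g)" by simp
  have 1: "ks (f + g) \<subseteq> ks f \<union> ks g" by (rule keys_add)
  show "lk (act (f + g) G) c = lk (act f G + act g G) c"
    unfolding lookup_add
    lookup_act_superset[OF K 1] lookup_act_superset[OF K Un_upper1] lookup_act_superset[OF K Un_upper2]
    by (simp add: lookup_add sum.distrib algebra_simps)
qed

lemma act_zero_left [simp]: "act 0 G = 0"
  by (simp add: act_def)

lemma act_zero_right [simp]: "act f 0 = 0"
  by (simp add: act_def)

lemma act_sum_left:
  fixes G :: "('n::finite, 'a::field) mpoly"
  shows "act (\<Sum>x\<in>A. f x) G = (\<Sum>x\<in>A. act (f x) G)"
  by (induction A rule: infinite_finite_induct) (auto simp: act_add_left)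

lemma act_add_right:
  fixes f G H :: "('n::finite, 'a::field) mpoly"
  shows "act f (G + H) = act f G + act f H"
  by (rule poly_mapping_eqI) (simp add: lookup_act lookup_add sum.distrib algebra_simps)

lemma act_sum_right:
  fixes f :: "('n::finite, 'a::field) mpoly"
  shows "act f (\<Sum>x\<in>A. H x) = (\<Sum>x\<in>A. act f (H x))"
  by (induction A rule: infinite_finite_induct) (auto simp: act_add_right)

lemma act_uminus_left:
  fixes f G :: "('n::finite, 'a::field) mpoly"
  shows "act (- f) G = - act f G"
  using act_add_left[of f "-f" G] by (simp add: add.inverse_unique)

lemma act_uminus_right:
  fixes f G :: "('n::finite, 'a::field) mpoly"
  shows "act f (- G) = - act f G"
  using act_add_right[of f G "-G"] by (simp add: add.inverse_unique)

lemma act_diff_left: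
  fixes f g G :: "('n::finite, 'a::field) mpoly"
  shows "act (f - g) G = act f G - act g G"
  using act_add_left[of f "-g" G] by (simp add: act_uminus_left)

lemma act_diff_right:
  fixes f G H :: "('n::finite, 'a::field) mpoly"
  shows "act f (G - H) = act f G - act f H"
  using act_add_right[of f G "-H"] by (simp add: act_uminus_right)

lemma lookup_sc: "lk (sg 0 u * G) k = (u::'a::comm_ring_1) * lk (G :: ('n \<Rightarrow>\<^sub>0 nat) \<Rightarrow>\<^sub>0 'a) k"
proof -
  have "lk (sg 0 u * G) k = lk (Poly_Mapping.map ((*) u) G) k"
    by (simp add: mult_map_scale_conv_mult)
  also have "\<dots> = u * lk G k"
    by (simp add: Poly_Mapping.map.rep_eq when_def)
  finally show ?thesis .
qed

lemma act_sc_right: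
  fixes f G :: "('n::finite, 'a::field) mpoly"
  shows "act f (sg 0 u * G) = sg 0 u * act f G"
  by (rule poly_mapping_eqI) (unfold lookup_act lookup_sc, simp add: sum_distrib_left mult_ac)

lemma act_sc_left:
  fixes f G :: "('n::finite, 'a::field) mpoly"
  shows "act (sg 0 u * f) G = sg 0 u * act f G"
proof (rule poly_mapping_eqI)
  fix c
  have K: "finite (ks f)" by simp
  have 1: "ks (sg 0 u * f) \<subseteq> ks f" by (auto simp: in_keys_iff lookup_sc)
  show "lk (act (sg 0 u * f) G) c = lk (sg 0 u * act f G) c"
    unfolding lookup_act_superset[OF K 1]
    unfolding lookup_sc lookup_act
    by (simp add: sum_distrib_left mult_ac)
qed

lemma pm_expand: "f = (\<Sum>a\<in>ks f. sg a (lk f a))"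
  by (rule poly_mapping_eqI) (simp add: lookup_sum lookup_single when_def in_keys_iff sum.delta)

lemma fact_div_chain:
  assumes "p \<le> q" "q \<le> r"
  shows "fact r div fact p = (fact r div fact q) * (fact q div (fact p :: nat))"
proof -
  have d1: "(fact q :: nat) dvd fact r" using assms(2) by (rule fact_dvd)
  have d2: "(fact p :: nat) dvd fact q" using assms(1) by (rule fact_dvd)
  obtain k where k: "fact r = fact q * (k::nat)" using d1 by (erule dvdE)
  obtain l where l: "fact q = fact p * (l::nat)" using d2 by (erule dvdE)
  have pq: "(fact p :: nat) > 0" "(fact q :: nat) > 0" by auto
  show ?thesis using pq by (simp add: k l mult.assoc)
qed

lemma ffp_mult:
  fixes c a a' :: "'n::finite \<Rightarrow>\<^sub>0 nat"
  shows "ffp (c + a + a') (a + a') = ffp (c + a + a') a' * ffp (c + a) a"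
  unfolding ffp_def prod.distrib[symmetric]
proof (rule prod.cong[OF refl])
  fix i
  have e1: "lk (c + a + a') i - lk (a + a') i = lk c i" by (simp add: lookup_add)
  have e2: "lk (c + a + a') i - lk a' i = lk c i + lk a i" by (simp add: lookup_add)
  have e3: "lk (c + a) i - lk a i = lk c i" by (simp add: lookup_add)
  show "fact (lk (c + a + a') i) div fact (lk (c + a + a') i - lk (a + a') i) =
         fact (lk (c + a + a') i) div fact (lk (c + a + a') i - lk a' i) *
         (fact (lk (c + a) i) div fact (lk (c + a) i - lk a i) :: nat)"
    unfolding e1 e2 e3 unfolding lookup_add by (rule fact_div_chain) auto
qed

lemma act_single_single:
  fixes G :: "('n::finite, 'a::field) mpoly"
  shows "act (sg a u * sg a' u') G = act (sg a u) (act (sg a' u') G)"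
proof (rule poly_mapping_eqI)
  fix c
  show "lk (act (sg a u * sg a' u') G) c = lk (act (sg a u) (act (sg a' u') G)) c"
    unfolding mult_single lookup_act_single
    using ffp_mult[of c a a']
    by (simp add: add.assoc add.commute add.left_commute mult_ac)
qed

lemma act_mult:
  fixes f g G :: "('n::finite, 'a::field) mpoly"
  shows "act (f * g) G = act f (act g G)"
proof -
  have fg: "f * g = (\<Sum>a\<in>ks f. \<Sum>a'\<in>ks g. sg a (lk f a) * sg a' (lk g a'))"
    by (subst pm_expand[of f], subst pm_expand[of g], rule sum_product)
  have "act (f * g) G = (\<Sum>a\<in>ks f. \<Sum>a'\<in>ks g. act (sg a (lk f a) * sg a' (lk g a')) G)"
    unfolding fg by (simp only: act_sum_left)
  also have "\<dots> = (\<Sum>a\<in>ks f. \<Sum>a'\<in>ks g. act (sg a (lk f a)) (act (sg a' (lk g a')) G))"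
    by (simp only: act_single_single)
  also have "\<dots> = (\<Sum>a\<in>ks f. act (sg a (lk f a)) (\<Sum>a'\<in>ks g. act (sg a' (lk g a')) G))"
    by (simp only: act_sum_right)
  also have "\<dots> = act (\<Sum>a\<in>ks f. sg a (lk f a)) (act (\<Sum>a'\<in>ks g. sg a' (lk g a')) G)"
    by (simp only: act_sum_left act_sum_right) (rule sum.swap)
  also have "\<dots> = act f (act g G)"
    using pm_expand[of f, symmetric] pm_expand[of g, symmetric] by simp
  finally show ?thesis .
qed

lemma act_one [simp]:
  fixes G :: "('n::finite, 'a::field) mpoly"
  shows "act 1 G = G"
proof (rule poly_mapping_eqI)
  fix c
  show "lk (act 1 G) c = lk G c"
    using lookup_act_single[of 0 1 G c] by (simp add: ffp_def flip: single_one)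
qed



lemma mdeg_add: "mdeg (a + b) = mdeg a + mdeg (b :: 'n::finite \<Rightarrow>\<^sub>0 nat)"
  by (simp add: mdeg_def lookup_add sum.distrib)

lemma mdeg_single: "mdeg (sg i (k::nat) :: 'n::finite \<Rightarrow>\<^sub>0 nat) = k"
  by (simp add: mdeg_def lookup_single when_def)

lemma homog_zero [simp]: "homog d (0 :: ('n::finite, 'a::zero) mpoly)"
  by (simp add: homog_def)

lemma homog_add:
  "homog d f \<Longrightarrow> homog d g \<Longrightarrow> homog d (f + g :: ('n::finite, 'a::monoid_add) mpoly)"
  unfolding homog_def using keys_add[of f g] by (meson UnE subsetD)

lemma homog_uminus:
  "homog d f \<Longrightarrow> homog d (- f :: ('n::finite, 'a::ab_group_add) mpoly)"
  unfolding homog_def by simp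

lemma homog_diff:
  "homog d f \<Longrightarrow> homog d g \<Longrightarrow> homog d (f - g :: ('n::finite, 'a::ab_group_add) mpoly)"
  using homog_add[of d f "-g"] homog_uminus[of d g] by simp

lemma homog_sum:
  "(\<And>x. x \<in> A \<Longrightarrow> homog d (f x)) \<Longrightarrow> homog d (\<Sum>x\<in>A. f x :: ('n::finite, 'a::comm_monoid_add) mpoly)"
  by (induction A rule: infinite_finite_induct) (auto intro: homog_add)

lemma homog_single: "homog (mdeg a) (sg a u :: ('n::finite, 'a::zero) mpoly)"
  by (simp add: homog_def)

lemma homog_sc:
  "homog d f \<Longrightarrow> homog d (sg 0 u * f :: ('n::finite, 'a::field) mpoly)"
  unfolding homog_def by (auto simp: in_keys_iff lookup_sc)

lemma homog_mult:
  assumes "homog p f" "homog q g"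
  shows "homog (p + q) (f * g :: ('n::finite, 'a::field) mpoly)"
  unfolding homog_def
proof
  fix m assume "m \<in> ks (f * g)"
  then obtain a b where "m = a + b" "a \<in> ks f" "b \<in> ks g" using keys_mult by blast
  then show "mdeg m = p + q" using assms by (simp add: homog_def mdeg_add)
qed

lemma homog_one: "homog 0 (1 :: ('n::finite, 'a::field) mpoly)"
  by (simp add: homog_def mdeg_def)

lemma homog_pow:
  assumes "homog p f"
  shows "homog (p * k) (f ^ k :: ('n::finite, 'a::field) mpoly)"
proof (induction k)
  case 0 then show ?case by (simp add: homog_one)
next
  case (Suc k)
  then show ?case using homog_mult[OF assms Suc] by (simp add: add.commute)
qed

definition lin :: "('n::finite, 'a::field) mpoly" where
  "lin = (\<Sum>i\<in>UNIV. var i)"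

lemma homog_lin: "homog 1 (lin :: ('n::finite, 'a::field) mpoly)"
  unfolding lin_def var_def by (rule homog_sum) (metis homog_single mdeg_single)

lemma homog_lin_pow: "homog k (lin ^ k :: ('n::finite, 'a::field) mpoly)"
  using homog_pow[OF homog_lin, of k] by simp

lemma act_homog_aux:
  fixes f G :: "('n::finite, 'a::field) mpoly"
  assumes "homog p f" "homog q G" "lk (act f G) c \<noteq> 0"
  shows "p \<le> q \<and> mdeg c = q - p"
proof -
  from assms(3) obtain a where a: "a \<in> ks f" "lk f a * lk G (c + a) * of_nat (ffp (c + a) a) \<noteq> 0"
    unfolding lookup_act by (meson sum.not_neutral_contains_not_neutral)
  then have "c + a \<in> ks G" by (auto simp: in_keys_iff)
  then show ?thesis using a(1) assms(1,2) by (auto simp: homog_def mdeg_add)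
qed

lemma act_homog:
  fixes f G :: "('n::finite, 'a::field) mpoly"
  assumes "homog p f" "homog q G"
  shows "homog (q - p) (act f G)"
  unfolding homog_def using act_homog_aux[OF assms] by (auto simp: in_keys_iff)

lemma act_homog_zero:
  fixes f G :: "('n::finite, 'a::field) mpoly"
  assumes "homog p f" "homog q G" "q < p"
  shows "act f G = 0"
  by (rule poly_mapping_eqI) (use act_homog_aux[OF assms(1,2)] assms(3) in force)

definition inbox :: "('n \<Rightarrow>\<^sub>0 nat) \<Rightarrow> ('n, 'a::zero) mpoly \<Rightarrow> bool" where
  "inbox b G \<longleftrightarrow> (\<forall>c\<in>ks G. \<forall>i. lk c i \<le> lk b i)"

lemma inbox_zero [simp]: "inbox b 0"
  by (simp add: inbox_def)

lemma inbox_add: "inbox b f \<Longrightarrow> inbox b g \<Longrightarrow> inbox b (f + g :: ('n, 'a::monoid_add) mpoly)"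
  unfolding inbox_def using keys_add[of f g] by (meson UnE subsetD)

lemma inbox_diff: "inbox b f \<Longrightarrow> inbox b g \<Longrightarrow> inbox b (f - g :: ('n, 'a::ab_group_add) mpoly)"
proof -
  assume a: "inbox b f" "inbox b g"
  have "inbox b (-g)" using a(2) unfolding inbox_def in_keys_iff lookup_uminus by simp
  then show ?thesis using inbox_add[OF a(1), of "-g"] by simp
qed

lemma inbox_sc: "inbox b f \<Longrightarrow> inbox b (sg 0 u * f :: ('n, 'a::field) mpoly)"
  unfolding inbox_def by (auto simp: in_keys_iff lookup_sc)

lemma inbox_act:
  fixes f G :: "('n::finite, 'a::field) mpoly"
  assumes "inbox b G"
  shows "inbox b (act f G)"
  unfolding inbox_def
proof (intro ballI allI)
  fix c i assume "c \<in> ks (act f G)"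
  then have "lk (act f G) c \<noteq> 0" by (simp add: in_keys_iff)
  then obtain a where a: "a \<in> ks f" "lk f a * lk G (c + a) * of_nat (ffp (c + a) a) \<noteq> 0"
    unfolding lookup_act by (meson sum.not_neutral_contains_not_neutral)
  then have "lk G (c + a) \<noteq> 0" by auto
  then have "c + a \<in> ks G" by (simp add: in_keys_iff)
  then have "lk (c + a) i \<le> lk b i" using assms unfolding inbox_def by blast
  then show "lk c i \<le> lk b i" by (simp add: lookup_add)
qed

lemma homog_monom: "homog (mdeg b) (monom b :: ('n::finite, 'a::field) mpoly)"
  unfolding monom_def by (rule homog_single)

lemma inbox_monom: "inbox b (monom b :: ('n::finite, 'a::field) mpoly)"
  unfolding monom_def inbox_def by simp

lemma ffp_unit: "ffp (c + sg i 1) (sg i 1) = lk c i + 1"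
proof -
  have "ffp (c + sg i 1) (sg i 1) = (\<Prod>j\<in>UNIV. if j = i then lk c i + 1 else 1)"
    unfolding ffp_def
    by (rule prod.cong[OF refl]) (auto simp: lookup_add lookup_single when_def)
  also have "\<dots> = lk c i + 1" by simp
  finally show ?thesis .
qed

lemma lookup_act_lin:
  fixes G :: "('n::finite, 'a::field) mpoly"
  shows "lk (act lin G) c = (\<Sum>i\<in>UNIV. of_nat (lk c i + 1) * lk G (c + sg i 1))"
  unfolding lin_def act_sum_left lookup_sum var_def lookup_act_single ffp_unit
  by (simp add: mult_ac)



definition Ufun :: "('n::finite \<Rightarrow>\<^sub>0 nat) \<Rightarrow> ('n, 'a::field) mpoly \<Rightarrow> ('n \<Rightarrow>\<^sub>0 nat) \<Rightarrow> 'a" where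
  "Ufun b G c = (\<Sum>i\<in>UNIV. if 0 < lk c i then of_int (int (lk b i) - int (lk c i) + 1) * lk G (c - sg i 1) else 0)"

lemma minus_plus_unit: "0 < lk c i \<Longrightarrow> c - sg i 1 + sg i 1 = (c :: 'n \<Rightarrow>\<^sub>0 nat)"
  by (rule poly_mapping_eqI) (auto simp: lookup_add lookup_minus lookup_single when_def)

lemma finite_Ufun: "finite {c. Ufun b G c \<noteq> 0}"
proof (rule finite_subset)
  show "{c. Ufun b G c \<noteq> 0} \<subseteq> (\<Union>i. (\<lambda>x. x + sg i 1) ` ks G)"
  proof
    fix c assume "c \<in> {c. Ufun b G c \<noteq> 0}"
    then obtain i where i: "(if 0 < lk c i then of_int (int (lk b i) - int (lk c i) + 1) * lk G (c - sg i 1) else 0) \<noteq> 0"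
      unfolding Ufun_def by (auto elim: sum.not_neutral_contains_not_neutral)
    then have h: "0 < lk c i" "lk G (c - sg i 1) \<noteq> 0" by (auto split: if_splits)
    then have "c - sg i 1 \<in> ks G" by (simp add: in_keys_iff)
    then have "c \<in> (\<lambda>x. x + sg i 1) ` ks G"
      using minus_plus_unit[OF h(1)] by (metis image_eqI)
    then show "c \<in> (\<Union>i. (\<lambda>x. x + sg i 1) ` ks G)" by blast
  qed
  show "finite (\<Union>i. (\<lambda>x. x + sg i 1) ` ks G)" by simp
qed

definition Uop :: "('n::finite \<Rightarrow>\<^sub>0 nat) \<Rightarrow> ('n, 'a::field) mpoly \<Rightarrow> ('n, 'a) mpoly" where
  "Uop b G = Abs_poly_mapping (Ufun b G)"

lemma lookup_Uop: "lk (Uop b G) c = Ufun b G c"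
  unfolding Uop_def using lookup_Abs_poly_mapping[OF finite_Ufun[of b G]] by simp

lemma Uop_add: "Uop b (G + H) = Uop b G + Uop b H"
  by (rule poly_mapping_eqI)
     (simp add: lookup_add lookup_Uop Ufun_def sum.distrib[symmetric] algebra_simps if_distrib cong: if_cong)

lemma Uop_sc: "Uop b (sg 0 u * G) = sg 0 u * Uop b G"
  by (rule poly_mapping_eqI)
     (unfold lookup_sc lookup_Uop Ufun_def lookup_sc, simp add: sum_distrib_left mult_ac if_distrib cong: if_cong)

lemma Uop_zero [simp]: "Uop b 0 = 0"
  using Uop_sc[of b 0 0] by simp

lemma Uop_keys:
  assumes "c \<in> ks (Uop b G)"
  obtains i where "0 < lk c i" "int (lk b i) - int (lk c i) + 1 \<noteq> 0" "c - sg i 1 \<in> ks G"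
proof -
  from assms have "Ufun b G c \<noteq> 0" by (simp add: in_keys_iff lookup_Uop)
  then obtain i where i: "(if 0 < lk c i then of_int (int (lk b i) - int (lk c i) + 1) * lk G (c - sg i 1) else 0) \<noteq> 0"
    unfolding Ufun_def by (auto elim: sum.not_neutral_contains_not_neutral)
  have h1: "0 < lk c i"
  proof (rule ccontr)
    assume "\<not> 0 < lk c i" then show False using i by simp
  qed
  have h2: "of_int (int (lk b i) - int (lk c i) + 1) * lk G (c - sg i 1) \<noteq> 0"
    using i h1 by (simp only: if_True not_False_eq_True)
  have h3: "int (lk b i) - int (lk c i) + 1 \<noteq> 0" using h2 by (metis mult_zero_left of_int_0)
  have h4: "lk G (c - sg i 1) \<noteq> 0" using h2 by (metis mult_zero_right)
  show ?thesis
    by (rule that[OF h1 h3]) (use h4 in \<open>simp add: in_keys_iff\<close>)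
qed

lemma inbox_Uop:
  assumes "inbox b G"
  shows "inbox b (Uop b G)"
  unfolding inbox_def
proof (intro ballI allI)
  fix c j assume "c \<in> ks (Uop b G)"
  then obtain i where i: "0 < lk c i" "int (lk b i) - int (lk c i) + 1 \<noteq> 0" "c - sg i 1 \<in> ks G"
    by (rule Uop_keys)
  have "lk (c - sg i 1) j \<le> lk b j" using assms i(3) unfolding inbox_def by blast
  then show "lk c j \<le> lk b j" using i(1,2)
    by (cases "i = j") (auto simp: lookup_minus lookup_single when_def)
qed

lemma homog_Uop:
  assumes "homog s G"
  shows "homog (s + 1) (Uop b G)"
  unfolding homog_def
proof
  fix c assume "c \<in> ks (Uop b G)"
  then obtain i where i: "0 < lk c i" "c - sg i 1 \<in> ks G"
    by (rule Uop_keys)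
  have "mdeg (c - sg i 1) = s" using assms i(2) unfolding homog_def by blast
  then show "mdeg c = s + 1" using minus_plus_unit[OF i(1)] mdeg_add[of "c - sg i 1" "sg i 1"]
    by (simp add: mdeg_single)
qed


lemma swap_unit: "i \<noteq> k \<Longrightarrow> c + sg i 1 - sg k 1 = c - sg k 1 + (sg i 1 :: 'n \<Rightarrow>\<^sub>0 nat)"
  by (rule poly_mapping_eqI) (auto simp: lookup_add lookup_minus lookup_single when_def)

lemma AB_diff:
  fixes G :: "('n::finite, 'a::field) mpoly"
  shows "of_nat (lk c i + 1) * (if 0 < lk (c + sg i 1) k then of_int (int (lk b k) - int (lk (c + sg i 1) k) + 1) * lk G (c + sg i 1 - sg k 1) else 0)
   - (if 0 < lk c k then of_int (int (lk b k) - int (lk c k) + 1) * (of_nat (lk (c - sg k 1) i + 1) * lk G (c - sg k 1 + sg i 1)) else 0)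
   = (if k = i then of_int (int (lk b i) - 2 * int (lk c i)) * lk G c else 0)"
proof (cases "k = i")
  case True
  show ?thesis
  proof (cases "lk c i = 0")
    case z: True
    show ?thesis using True z by (simp add: lookup_add lookup_single)
  next
    case nz: False
    then have cc: "c - sg i 1 + sg i 1 = c" using minus_plus_unit[of c i] by simp
    have l1: "lk (c - sg i 1) i + 1 = lk c i" using nz by (simp add: lookup_minus)
    have "of_nat (lk c i + 1) * of_int (int (lk b i) - int (lk c i + 1) + 1) - 
          of_int (int (lk b i) - int (lk c i) + 1) * of_nat (lk c i) =
          (of_int (int (lk b i) - 2 * int (lk c i)) :: 'a)"
    proof -
      have "of_nat (lk c i + 1) * of_int (int (lk b i) - int (lk c i + 1) + 1) - 
          of_int (int (lk b i) - int (lk c i) + 1) * of_nat (lk c i) =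
          (of_int ((int (lk c i) + 1) * (int (lk b i) - int (lk c i + 1) + 1) - 
          (int (lk b i) - int (lk c i) + 1) * int (lk c i)) :: 'a)"
        by simp
      also have "(int (lk c i) + 1) * (int (lk b i) - int (lk c i + 1) + 1) - 
          (int (lk b i) - int (lk c i) + 1) * int (lk c i) = int (lk b i) - 2 * int (lk c i)"
        by (simp add: algebra_simps)
      finally show ?thesis .
    qed
    then show ?thesis using True nz cc l1
      by (simp add: lookup_add lookup_single algebra_simps)
  qed
next
  case False
  have l: "lk (c + sg i 1) k = lk c k" "lk (c - sg k 1) i = lk c i"
    using False by (auto simp: lookup_add lookup_minus lookup_single when_def)
  show ?thesis using False l swap_unit[OF False[symmetric], of c] by (simp add: mult_ac)
qed


lemma lookup_comm:
  fixes G :: "('n::finite, 'a::field) mpoly"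
  shows "lk (act lin (Uop b G)) c - lk (Uop b (act lin G)) c =
    of_int (int (mdeg b) - 2 * int (mdeg c)) * lk G c"
proof -
  define A where "A i k = of_nat (lk c i + 1) * (if 0 < lk (c + sg i 1) k then of_int (int (lk b k) - int (lk (c + sg i 1) k) + 1) * lk G (c + sg i 1 - sg k 1) else (0::'a))" for i k
  define B where "B i k = (if 0 < lk c k then of_int (int (lk b k) - int (lk c k) + 1) * (of_nat (lk (c - sg k 1) i + 1) * lk G (c - sg k 1 + sg i 1)) else (0::'a))" for i k
  have 1: "lk (act lin (Uop b G)) c = (\<Sum>i\<in>UNIV. \<Sum>k\<in>UNIV. A i k)"
    unfolding lookup_act_lin lookup_Uop Ufun_def A_def
    by (simp add: sum_distrib_left if_distrib cong: if_cong)
  have 2: "lk (Uop b (act lin G)) c = (\<Sum>k\<in>UNIV. \<Sum>i\<in>UNIV. B i k)"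
    unfolding lookup_Uop Ufun_def B_def lookup_act_lin
    by (rule sum.cong[OF refl]) (simp add: sum_distrib_left)
  have 3: "(\<Sum>k\<in>UNIV. \<Sum>i\<in>UNIV. B i k) = (\<Sum>i\<in>UNIV. \<Sum>k\<in>UNIV. B i k)"
    by (rule sum.swap)
  have 4: "A i k - B i k = (if k = i then of_int (int (lk b i) - 2 * int (lk c i)) * lk G c else 0)" for i k
    unfolding A_def B_def by (rule AB_diff)
  have "lk (act lin (Uop b G)) c - lk (Uop b (act lin G)) c = (\<Sum>i\<in>UNIV. \<Sum>k\<in>UNIV. A i k - B i k)"
    unfolding 1 2 3 by (simp add: sum_subtractf)
  also have "\<dots> = (\<Sum>i\<in>UNIV. of_int (int (lk b i) - 2 * int (lk c i)) * lk G c)"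
    unfolding 4 by simp
  also have "\<dots> = of_int (\<Sum>i\<in>UNIV. int (lk b i) - 2 * int (lk c i)) * lk G c"
    by (simp add: sum_distrib_right)
  also have "(\<Sum>i\<in>UNIV. int (lk b i) - 2 * int (lk c i)) = int (mdeg b) - 2 * int (mdeg c)"
    by (simp add: mdeg_def sum_subtractf sum_distrib_left)
  finally show ?thesis .
qed

lemma comm_homog:
  fixes G :: "('n::finite, 'a::field) mpoly"
  assumes "homog s G"
  shows "act lin (Uop b G) = Uop b (act lin G) + sg 0 (of_int (int (mdeg b) - 2 * int s)) * G"
proof (rule poly_mapping_eqI)
  fix c
  have "lk G c \<noteq> 0 \<Longrightarrow> mdeg c = s" using assms by (auto simp: homog_def in_keys_iff)
  then have "of_int (int (mdeg b) - 2 * int (mdeg c)) * lk G c = of_int (int (mdeg b) - 2 * int s) * lk G c"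
    by (cases "lk G c = 0") auto
  then show "lk (act lin (Uop b G)) c = lk (Uop b (act lin G) + sg 0 (of_int (int (mdeg b) - 2 * int s)) * G) c"
  proof -
    have e: "lk (act lin (Uop b G)) c = lk (Uop b (act lin G)) c + of_int (int (mdeg b) - 2 * int s) * lk G c"
      using lookup_comm[of b G c] \<open>of_int (int (mdeg b) - 2 * int (mdeg c)) * lk G c = _\<close>
      by (metis diff_eq_eq add.commute)
    show ?thesis unfolding lookup_add lookup_sc by (rule e)
  qed
qed



lemma homog_Upow: "homog s G \<Longrightarrow> homog (s + j) ((Uop b ^^ j) G)"
  by (induction j) (auto dest: homog_Uop)

lemma inbox_Upow: "inbox b G \<Longrightarrow> inbox b ((Uop b ^^ j) G)"
  by (induction j) (auto dest: inbox_Uop)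

lemma sc_add: "sg 0 a * X + sg 0 b * X = sg 0 (a + b) * (X :: ('n, 'a::field) mpoly)"
  by (simp add: single_add distrib_right)

lemma sc_sc: "sg 0 a * (sg 0 b * X) = sg 0 (a * b) * (X :: ('n, 'a::field) mpoly)"
  by (simp add: mult_single mult.assoc[symmetric])

lemma DUj:
  fixes w :: "('n::finite, 'a::field) mpoly"
  assumes "homog s w" "act lin w = 0"
  shows "act lin ((Uop b ^^ Suc j) w) =
    sg 0 (of_int ((int j + 1) * (int (mdeg b) - 2 * int s - int j))) * (Uop b ^^ j) w"
proof (induction j)
  case 0
  show ?case using comm_homog[OF assms(1), of b] assms(2) by simp
next
  case (Suc j)
  have h: "homog (s + Suc j) ((Uop b ^^ Suc j) w)" by (rule homog_Upow[OF assms(1)])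
  have "act lin ((Uop b ^^ Suc (Suc j)) w) = act lin (Uop b ((Uop b ^^ Suc j) w))" by simp
  also have "\<dots> = Uop b (act lin ((Uop b ^^ Suc j) w)) +
      sg 0 (of_int (int (mdeg b) - 2 * int (s + Suc j))) * (Uop b ^^ Suc j) w"
    by (rule comm_homog[OF h])
  also have "\<dots> = sg 0 (of_int ((int j + 1) * (int (mdeg b) - 2 * int s - int j))) * (Uop b ^^ Suc j) w +
      sg 0 (of_int (int (mdeg b) - 2 * int (s + Suc j))) * (Uop b ^^ Suc j) w"
    unfolding Suc Uop_sc by simp
  also have "\<dots> = sg 0 (of_int ((int j + 1) * (int (mdeg b) - 2 * int s - int j)) +
       of_int (int (mdeg b) - 2 * int (s + Suc j))) * (Uop b ^^ Suc j) w"
    by (rule sc_add)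
  also have "(of_int ((int j + 1) * (int (mdeg b) - 2 * int s - int j)) +
       of_int (int (mdeg b) - 2 * int (s + Suc j)) :: 'a) =
      of_int ((int (Suc j) + 1) * (int (mdeg b) - 2 * int s - int (Suc j)))"
    unfolding of_int_add[symmetric] by (simp add: algebra_simps)
  finally show ?case .
qed

lemma DrUr:
  fixes w :: "('n::finite, 'a::field) mpoly"
  assumes "homog s w" "act lin w = 0"
  shows "act (lin ^ r) ((Uop b ^^ r) w) =
    sg 0 (\<Prod>j<r. of_int ((int j + 1) * (int (mdeg b) - 2 * int s - int j))) * w"
proof (induction r)
  case 0
  then show ?case by simp
next
  case (Suc r)
  have "act (lin ^ Suc r) ((Uop b ^^ Suc r) w) = act (lin ^ r) (act lin ((Uop b ^^ Suc r) w))"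
    by (simp only: power_Suc2 act_mult)
  also have "\<dots> = act (lin ^ r) (sg 0 (of_int ((int r + 1) * (int (mdeg b) - 2 * int s - int r))) * (Uop b ^^ r) w)"
    unfolding DUj[OF assms] ..
  also have "\<dots> = sg 0 (of_int ((int r + 1) * (int (mdeg b) - 2 * int s - int r))) * act (lin ^ r) ((Uop b ^^ r) w)"
    by (rule act_sc_right)
  also have "\<dots> = sg 0 (\<Prod>j<Suc r. of_int ((int j + 1) * (int (mdeg b) - 2 * int s - int j))) * w"
    unfolding Suc sc_sc by (simp add: mult.commute)
  finally show ?case .
qed

lemma DrUr_coeff_nz:
  assumes "2 * s + r \<le> m"
  shows "(\<Prod>j<r. of_int ((int j + 1) * (int m - 2 * int s - int j))) \<noteq> (0 :: 'a::field_char_0)"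
proof -
  have "of_int ((int j + 1) * (int m - 2 * int s - int j)) \<noteq> (0::'a)" if "j < r" for j
  proof -
    have "(int j + 1) * (int m - 2 * int s - int j) > 0" using that assms by (intro mult_pos_pos) auto
    then show ?thesis by (simp only: of_int_eq_0_iff)
  qed
  then show ?thesis by (simp add: prod_zero_iff)
qed


lemma surj_step:
  fixes v z :: "('n::finite, 'a::field_char_0) mpoly"
  assumes m: "2 * t + r \<le> mdeg b" and v: "homog t v" "inbox b v"
    and z: "homog (t + r + 1) z" "inbox b z" "act (lin ^ (r + 2)) z = act lin v"
  shows "\<exists>y. homog (t + r) y \<and> inbox b y \<and> act (lin ^ r) y = v"
proof -
  define v0 where "v0 = v - act (lin ^ (r + 1)) z"
  have "homog (t + r + 1 - (r + 1)) (act (lin ^ (r + 1)) z)"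
    by (rule act_homog[OF homog_lin_pow z(1)])
  then have hv0: "homog t v0" unfolding v0_def using v(1) by (intro homog_diff) auto
  have bv0: "inbox b v0" unfolding v0_def using v(2) z(2) by (intro inbox_diff inbox_act)
  have "act lin v0 = act lin v - act (lin * lin ^ (r + 1)) z"
    unfolding v0_def act_diff_right act_mult ..
  also have "lin * lin ^ (r + 1) = (lin ^ (r + 2) :: ('n, 'a) mpoly)" by simp
  finally have dv0: "act lin v0 = 0" using z(3) by simp
  define P :: 'a where "P = (\<Prod>j<r. of_int ((int j + 1) * (int (mdeg b) - 2 * int t - int j)))"
  have P: "P \<noteq> 0" unfolding P_def by (rule DrUr_coeff_nz[OF m])
  define y where "y = act lin z + sg 0 (inverse P) * (Uop b ^^ r) v0"
  have "homog (t + r + 1 - 1) (act lin z)" by (rule act_homog[OF homog_lin z(1)])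
  moreover have "homog (t + r) ((Uop b ^^ r) v0)" by (rule homog_Upow[OF hv0])
  ultimately have hy: "homog (t + r) y" unfolding y_def by (auto intro: homog_add homog_sc)
  have by': "inbox b y" unfolding y_def using z(2) bv0
    by (intro inbox_add inbox_act inbox_sc inbox_Upow)
  have "act (lin ^ r) y = act (lin ^ r * lin) z + sg 0 (inverse P) * act (lin ^ r) ((Uop b ^^ r) v0)"
    unfolding y_def act_add_right act_sc_right act_mult ..
  also have "\<dots> = act (lin ^ (r + 1)) z + sg 0 (inverse P) * (sg 0 P * v0)"
    unfolding DrUr[OF hv0 dv0] P_def by (simp add: power_Suc2 mult.commute)
  also have "\<dots> = act (lin ^ (r + 1)) z + v0"
    unfolding sc_sc using P by simp
  also have "\<dots> = v" unfolding v0_def by simp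
  finally show ?thesis using hy by' by blast
qed

lemma surj_box:
  fixes v :: "('n::finite, 'a::field_char_0) mpoly"
  assumes "2 * t + r \<le> mdeg b" "homog t v" "inbox b v"
  shows "\<exists>y. homog (t + r) y \<and> inbox b y \<and> act (lin ^ r) y = v"
  using assms
proof (induction t arbitrary: r v)
  case 0
  have "act lin v = 0" by (rule act_homog_zero[OF homog_lin 0(2)]) simp
  then show ?case using surj_step[OF 0(1-3), of 0] by simp
next
  case (Suc t)
  have h1: "homog (Suc t - 1) (act lin v)" by (rule act_homog[OF homog_lin Suc(3)])
  have b1: "inbox b (act lin v)" using Suc(4) by (rule inbox_act)
  obtain z where z: "homog (t + (r + 2)) z" "inbox b z" "act (lin ^ (r + 2)) z = act lin v"
    using Suc(1)[of "r + 2" "act lin v"] Suc(2) h1 b1 by auto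
  show ?case by (rule surj_step[OF Suc(2-4), of z]) (use z in auto)
qed



lemma add_minus_eq_iff:
  fixes b c c' :: "'n \<Rightarrow>\<^sub>0 nat"
  assumes "\<forall>i. lk c i \<le> lk b i"
  shows "c' + (b - c) = b \<longleftrightarrow> c' = c"
proof
  assume "c' + (b - c) = b"
  then have e: "lk c' i + (lk b i - lk c i) = lk b i" for i by (metis lookup_add lookup_minus)
  have "lk c' i = lk c i" for i using e[of i] assms[rule_format, of i] by arith
  then show "c' = c" by (rule poly_mapping_eqI)
next
  assume "c' = c"
  then show "c' + (b - c) = b" using assms by (auto intro!: poly_mapping_eqI simp: lookup_add lookup_minus)
qed

lemma ffp_pos:
  assumes "\<forall>i. lk c i \<le> lk b i"
  shows "ffp b (b - c) \<noteq> 0"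
  unfolding ffp_def
proof (subst prod_zero_iff)
  show "finite (UNIV :: 'a set)" by simp
  show "\<not> (\<exists>i\<in>UNIV. fact (lk b i) div fact (lk b i - lk (b - c) i) = (0::nat))"
  proof
    assume "\<exists>i\<in>UNIV. fact (lk b i) div fact (lk b i - lk (b - c) i) = (0::nat)"
    then obtain i where "fact (lk b i) div fact (lk b i - lk (b - c) i) = (0::nat)" by blast
    moreover have "lk b i - lk (b - c) i = lk c i" using assms by (simp add: lookup_minus)
    moreover have "(fact (lk c i) :: nat) \<le> fact (lk b i)" using assms by (simp add: fact_mono)
    ultimately show False by (simp add: div_eq_0_iff)
  qed
qed

lemma act_single_monom:
  fixes u :: "'a::field"
  assumes "\<forall>i. lk c i \<le> lk b i"
  shows "act (sg (b - c) u) (monom b :: ('n::finite, 'a) mpoly) = sg c (u * of_nat (ffp b (b - c)))"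
proof (rule poly_mapping_eqI)
  fix c'
  show "lk (act (sg (b - c) u) (monom b :: ('n, 'a) mpoly)) c' = lk (sg c (u * of_nat (ffp b (b - c)))) c'"
    unfolding lookup_act_single monom_def using add_minus_eq_iff[OF assms, of c']
    by (auto simp: lookup_single when_def)
qed

lemma mdeg_minus:
  assumes "\<forall>i. lk c i \<le> lk b i"
  shows "mdeg (b - c) = mdeg b - mdeg (c :: 'n::finite \<Rightarrow>\<^sub>0 nat)"
proof -
  have "b - c + c = b" using assms by (auto intro!: poly_mapping_eqI simp: lookup_add lookup_minus)
  then have "mdeg (b - c) + mdeg c = mdeg b" by (metis mdeg_add)
  then show ?thesis by simp
qed

lemma rep_box:
  fixes G :: "('n::finite, 'a::field_char_0) mpoly"
  assumes "inbox b G" "homog k G"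
  shows "\<exists>h. homog (mdeg b - k) h \<and> act h (monom b) = G"
proof -
  define h where "h = (\<Sum>c\<in>ks G. sg (b - c) (lk G c / of_nat (ffp b (b - c))) :: ('n, 'a) mpoly)"
  have le: "\<forall>i. lk c i \<le> lk b i" if "c \<in> ks G" for c using assms(1) that by (auto simp: inbox_def)
  have "act h (monom b) = (\<Sum>c\<in>ks G. act (sg (b - c) (lk G c / of_nat (ffp b (b - c)))) (monom b))"
    unfolding h_def by (rule act_sum_left)
  also have "\<dots> = (\<Sum>c\<in>ks G. sg c (lk G c))"
  proof (rule sum.cong[OF refl])
    fix c assume c: "c \<in> ks G"
    have "(of_nat (ffp b (b - c)) :: 'a) \<noteq> 0" using ffp_pos[OF le[OF c]] by simp
    then show "act (sg (b - c) (lk G c / of_nat (ffp b (b - c)))) (monom b) = sg c (lk G c)"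
      unfolding act_single_monom[OF le[OF c]] by simp
  qed
  also have "\<dots> = G" by (rule pm_expand[symmetric])
  finally have 1: "act h (monom b) = G" .
  have 2: "homog (mdeg b - k) h"
    unfolding h_def
  proof (rule homog_sum)
    fix c assume c: "c \<in> ks G"
    have "mdeg c = k" using assms(2) c by (auto simp: homog_def)
    then have "mdeg (b - c) = mdeg b - k" using mdeg_minus[OF le[OF c]] by simp
    then show "homog (mdeg b - k) (sg (b - c) (lk G c / of_nat (ffp b (b - c))) :: ('n, 'a) mpoly)"
      by (metis homog_single)
  qed
  show ?thesis using 1 2 by blast
qed

lemma zero_test:
  fixes G :: "('n::finite, 'a::field_char_0) mpoly"
  assumes "act (sg a 1) G = 0"
  shows "lk G a = 0"
proof -
  have "lk (act (sg a 1) G) 0 = lk G a * of_nat (ffp a a)"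
    unfolding lookup_act_single by simp
  moreover have "ffp a a \<noteq> 0" unfolding ffp_def by simp
  ultimately show ?thesis using assms by simp
qed



lemma act_act: "act p (act q X) = act (p * q) (X :: ('n::finite, 'a::field) mpoly)"
  by (simp add: act_mult)

theorem SLP_main:
  "SLP_quot (Ann (act (lin ^ d) (monom b) :: ('n::finite, 'a::field_char_0) mpoly))"
proof -
  define F where "F = (act (lin ^ d) (monom b) :: ('n, 'a) mpoly)"
  define m where "m = mdeg b"
  have hF: "homog (m - d) F" unfolding F_def m_def by (rule act_homog[OF homog_lin_pow homog_monom])
  have "\<forall>i j. (\<forall>f. homog i f \<and> lin ^ j * f \<in> Ann F \<longrightarrow> f \<in> Ann F) \<or>
            (\<forall>g. homog (i + j) g \<longrightarrow> (\<exists>f. homog i f \<and> g - lin ^ j * f \<in> Ann F))"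
  proof (intro allI)
    fix i j
    show "(\<forall>f. homog i f \<and> lin ^ j * f \<in> Ann F \<longrightarrow> f \<in> Ann F) \<or>
            (\<forall>g. homog (i + j) g \<longrightarrow> (\<exists>f. homog i f \<and> g - lin ^ j * f \<in> Ann F))"
    proof (cases "2 * i + d + j \<le> m")
      case True
      have "\<forall>f. homog i f \<and> lin ^ j * f \<in> Ann F \<longrightarrow> f \<in> Ann F"
      proof (intro allI impI)
        fix f :: "('n, 'a) mpoly"
        assume "homog i f \<and> lin ^ j * f \<in> Ann F"
        then have hf: "homog i f" and zf: "act (lin ^ j * f) F = 0" by (auto simp: Ann_def)
        define G where "G = act f F"
        have hG: "homog (m - d - i) G" unfolding G_def by (rule act_homog[OF hf hF])
        have "G = 0"
        proof (rule poly_mapping_eqI)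
          fix a
          show "lk G a = lk 0 a"
          proof (cases "mdeg a = m - d - i")
            case False
            then show ?thesis using hG by (auto simp: homog_def in_keys_iff)
          next
            case ma: True
            define G0 where "G0 = act (sg a 1) (monom b :: ('n, 'a) mpoly)"
            have "homog (m - mdeg a) G0" unfolding G0_def m_def by (rule act_homog[OF homog_single homog_monom])
            then have hG0: "homog (i + d) G0" using ma True by (simp add: algebra_simps)
            have bG0: "inbox b G0" unfolding G0_def by (rule inbox_act[OF inbox_monom])
            define G1 where "G1 = act (lin ^ d) G0"
            have "homog (i + d - d) G1" unfolding G1_def by (rule act_homog[OF homog_lin_pow hG0])
            then have hG1: "homog i G1" by simp
            have bG1: "inbox b G1" unfolding G1_def by (rule inbox_act[OF bG0])
            obtain y where y: "homog (i + (d + j)) y" "inbox b y" "act (lin ^ (d + j)) y = G1"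
              using surj_box[OF _ hG1 bG1, of "d + j"] True unfolding m_def by auto
            obtain h where h: "act h (monom b) = y"
              using rep_box[OF y(2) y(1)] by blast
            have "act (sg a 1) G = act f G1"
              unfolding G_def G1_def G0_def F_def act_act by (simp add: mult_ac)
            also have "\<dots> = act (h * (lin ^ j * f) * lin ^ d) (monom b)"
              unfolding y(3)[symmetric] h[symmetric] act_act by (simp add: mult_ac power_add)
            also have "\<dots> = 0"
              using zf by (simp add: act_mult F_def[symmetric])
            finally show ?thesis using zero_test by simp
          qed
        qed
        then show "f \<in> Ann F" unfolding Ann_def G_def by simp
      qed
      then show ?thesis by blast
    next
      case False
      have "\<forall>g. homog (i + j) g \<longrightarrow> (\<exists>f. homog i f \<and> g - lin ^ j * f \<in> Ann F)"
      proof (intro allI impI)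
        fix g :: "('n, 'a) mpoly"
        assume hg: "homog (i + j) g"
        define G0 where "G0 = act g (monom b :: ('n, 'a) mpoly)"
        have hG0: "homog (m - (i + j)) G0" unfolding G0_def m_def by (rule act_homog[OF hg homog_monom])
        have bG0: "inbox b G0" unfolding G0_def by (rule inbox_act[OF inbox_monom])
        define G1 where "G1 = act (lin ^ d) G0"
        have hG1: "homog (m - (i + j) - d) G1" unfolding G1_def by (rule act_homog[OF homog_lin_pow hG0])
        have bG1: "inbox b G1" unfolding G1_def by (rule inbox_act[OF bG0])
        have gF: "act g F = G1" unfolding G1_def G0_def F_def act_act by (simp add: mult_ac)
        show "\<exists>f. homog i f \<and> g - lin ^ j * f \<in> Ann F"
        proof (cases "i + j + d \<le> m")
          case False
          have "G1 = 0"
          proof (cases "i + j \<le> m")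
            case True
            show ?thesis unfolding G1_def by (rule act_homog_zero[OF homog_lin_pow hG0]) (use True False in arith)
          next
            case False
            have "G0 = 0" unfolding G0_def m_def
              by (rule act_homog_zero[OF hg homog_monom]) (use False m_def in simp)
            then show ?thesis unfolding G1_def by simp
          qed
          then show ?thesis using gF by (intro exI[of _ 0]) (simp add: Ann_def)
        next
          case True
          have ar: "2 * (m - (i + j) - d) + (d + j) \<le> m" using True \<open>\<not> 2 * i + d + j \<le> m\<close> by arith
          obtain y where y: "homog (m - (i + j) - d + (d + j)) y" "inbox b y" "act (lin ^ (d + j)) y = G1"
            using surj_box[OF ar[unfolded m_def] hG1[unfolded m_def] bG1] unfolding m_def by blast
          have "m - (i + j) - d + (d + j) = m - i" using True by simp
          then have y1: "homog (m - i) y" using y(1) by simp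
          obtain f where f: "homog (mdeg b - (m - i)) f" "act f (monom b) = y"
            using rep_box[OF y(2) y1] by blast
          have hf: "homog i f" using f(1) True unfolding m_def by simp
          have "act (lin ^ j * f) F = act (lin ^ (d + j)) (act f (monom b))"
            unfolding F_def act_act by (simp add: mult_ac power_add)
          also have "\<dots> = act g F" unfolding f(2) y(3) gF ..
          finally show ?thesis using hf by (intro exI[of _ f]) (simp add: Ann_def act_diff_left)
        qed
      qed
      then show ?thesis by blast
    qed
  qed
  then show ?thesis unfolding SLP_quot_def F_def using homog_lin by blast
qed



definition ind :: "'n set \<Rightarrow> ('n \<Rightarrow>\<^sub>0 nat)" where
  "ind T = (\<Sum>i\<in>T. sg i 1)"

lemma lookup_ind: "lk (ind T) j = (if j \<in> (T :: 'n::finite set) then 1 else 0)"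
  unfolding ind_def lookup_sum by (simp add: lookup_single when_def)

lemma mdeg_ind: "mdeg (ind (T :: 'n::finite set)) = card T"
  unfolding mdeg_def lookup_ind by (simp add: sum.If_cases)

definition zo :: "('n \<Rightarrow>\<^sub>0 nat) \<Rightarrow> bool" where
  "zo c \<longleftrightarrow> (\<forall>i. lk c i \<le> 1)"

lemma zo_ind: "zo (ind (T :: 'n::finite set))"
  by (simp add: zo_def lookup_ind)

lemma ind_eq_iff:
  assumes "zo c"
  shows "ind T = c \<longleftrightarrow> T = {i :: 'n::finite. lk c i = 1}"
proof
  assume h: "ind T = c"
  show "T = {i. lk c i = 1}" unfolding h[symmetric] by (auto simp: lookup_ind)
next
  assume T: "T = {i. lk c i = 1}"
  show "ind T = c"
  proof (rule poly_mapping_eqI)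
    fix j
    show "lk (ind T) j = lk c j" using assms T by (auto simp: lookup_ind zo_def le_Suc_eq)
  qed
qed

lemma mdeg_zo:
  assumes "zo c"
  shows "mdeg c = card {i :: 'n::finite. lk c i = 1}"
proof -
  have "c = ind {i. lk c i = 1}" using ind_eq_iff[OF assms, of "{i. lk c i = 1}"] by simp
  then show ?thesis by (metis mdeg_ind)
qed

lemma lookup_elem_sym:
  "lk (elem_sym d :: ('n::finite, 'a::field) mpoly) c = (if zo c \<and> mdeg c = d then 1 else 0)"
proof -
  have "lk (elem_sym d :: ('n, 'a) mpoly) c = (\<Sum>T\<in>{T. card T = d}. if ind T = c then 1 else 0)"
    unfolding elem_sym_def lookup_sum monom_def ind_def[symmetric] by (simp add: lookup_single when_def)
  also have "\<dots> = (if zo c \<and> mdeg c = d then 1 else 0)"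
  proof (cases "zo c")
    case True
    have "(\<Sum>T\<in>{T. card T = d}. if ind T = c then 1 else (0::'a)) =
        (\<Sum>T\<in>{T. card T = d}. if T = {i. lk c i = 1} then 1 else 0)"
      using ind_eq_iff[OF True] by simp
    also have "\<dots> = (if {i. lk c i = 1} \<in> {T. card T = d} then 1 else 0)"
      by (rule sum.delta) simp
    finally show ?thesis using mdeg_zo[OF True] True by simp
  next
    case False
    then have "ind T \<noteq> c" for T using zo_ind by metis
    then show ?thesis using False by simp
  qed
  finally show ?thesis .
qed

lemma zo_add_unit: "zo (c + sg i 1) \<longleftrightarrow> zo c \<and> lk c i = 0"
proof -
  have l: "lk (c + sg i 1) j = lk c j + (if i = j then 1 else 0)" for j
    by (simp add: lookup_add lookup_single when_def)
  show ?thesis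
  proof
    assume h: "zo (c + sg i 1)"
    have "lk c j \<le> 1" for j using h[unfolded zo_def, rule_format, of j] l[of j] by linarith
    moreover have "lk c i = 0" using h[unfolded zo_def, rule_format, of i] l[of i] by simp
    ultimately show "zo c \<and> lk c i = 0" by (simp add: zo_def)
  next
    assume h: "zo c \<and> lk c i = 0"
    have "lk (c + sg i 1) j \<le> 1" for j
      using h l[of j] by (cases "i = j") (auto simp: zo_def)
    then show "zo (c + sg i 1)" by (simp add: zo_def)
  qed
qed

lemma card_zero_one:
  assumes "zo c"
  shows "card {i :: 'n::finite. lk c i = 0} = card (UNIV :: 'n set) - mdeg c"
proof -
  have "{i. lk c i = 0} = UNIV - {i. lk c i = 1}" using assms by (auto simp: zo_def le_Suc_eq)
  then show ?thesis by (simp add: card_Diff_subset mdeg_zo[OF assms])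
qed

lemma act_lin_elem_sym:
  "act lin (elem_sym (Suc d) :: ('n::finite, 'a::field) mpoly) = sg 0 (of_nat (card (UNIV :: 'n set) - d)) * elem_sym d"
proof (rule poly_mapping_eqI)
  fix c
  have "lk (act lin (elem_sym (Suc d) :: ('n, 'a) mpoly)) c =
    (\<Sum>i\<in>UNIV. if zo c \<and> mdeg c = d \<and> lk c i = 0 then 1 else 0)"
    unfolding lookup_act_lin lookup_elem_sym
  proof (rule sum.cong[OF refl])
    fix i
    show "of_nat (lk c i + 1) * (if zo (c + sg i 1) \<and> mdeg (c + sg i 1) = Suc d then 1 else 0) =
      (if zo c \<and> mdeg c = d \<and> lk c i = 0 then (1::'a) else 0)"
      unfolding zo_add_unit mdeg_add mdeg_single by auto
  qed
  also have "\<dots> = (if zo c \<and> mdeg c = d then of_nat (card {i. lk c i = 0}) else 0)"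
    by (auto simp: sum.If_cases)
  also have "\<dots> = lk (sg 0 (of_nat (card (UNIV :: 'n set) - d)) * elem_sym d :: ('n, 'a) mpoly) c"
    unfolding lookup_sc lookup_elem_sym using card_zero_one[of c] by auto
  finally show "lk (act lin (elem_sym (Suc d) :: ('n, 'a) mpoly)) c =
      lk (sg 0 (of_nat (card (UNIV :: 'n set) - d)) * elem_sym d :: ('n, 'a) mpoly) c" .
qed

lemma act_pow_elem_sym:
  "r \<le> card (UNIV :: 'n set) \<Longrightarrow> act (lin ^ r) (elem_sym (card (UNIV :: 'n set)) :: ('n::finite, 'a::field) mpoly) =
    sg 0 (of_nat (fact r)) * elem_sym (card (UNIV :: 'n set) - r)"
proof (induction r)
  case 0
  then show ?case by simp
next
  case (Suc r)
  have e: "card (UNIV :: 'n set) - r = Suc (card (UNIV :: 'n set) - Suc r)" using Suc(2) by simp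
  have "act (lin ^ Suc r) (elem_sym (card (UNIV :: 'n set)) :: ('n, 'a) mpoly) = act lin (act (lin ^ r) (elem_sym (card (UNIV :: 'n set)) :: ('n, 'a) mpoly))"
    by (simp add: act_mult)
  also have "\<dots> = sg 0 (of_nat (fact r)) * act lin (elem_sym (Suc (card (UNIV :: 'n set) - Suc r)) :: ('n, 'a) mpoly)"
    using Suc by (simp del: single_of_nat add: act_sc_right e)
  also have "\<dots> = sg 0 (of_nat (fact r)) * (sg 0 (of_nat (card (UNIV :: 'n set) - (card (UNIV :: 'n set) - Suc r))) * elem_sym (card (UNIV :: 'n set) - Suc r))"
    unfolding act_lin_elem_sym ..
  also have "\<dots> = sg 0 (of_nat (fact (Suc r))) * elem_sym (card (UNIV :: 'n set) - Suc r)"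
    unfolding sc_sc using Suc(2) by (simp del: single_of_nat add: algebra_simps)
  finally show ?case .
qed

lemma elem_sym_top: "elem_sym (card (UNIV :: 'n set)) = (monom (ind (UNIV :: 'n::finite set)) :: ('n, 'a::field) mpoly)"
proof -
  have "card T = card (UNIV::'n set) \<longleftrightarrow> T = UNIV" for T :: "'n set"
    using card_eq_UNIV_imp_eq_UNIV[of T] by auto
  then have "{T :: 'n set. card T = card (UNIV :: 'n set)} = {UNIV}" by auto
  then show ?thesis unfolding elem_sym_def ind_def by simp
qed

lemma Ann_sc:
  fixes G :: "('n::finite, 'a::field) mpoly"
  assumes "u \<noteq> 0"
  shows "Ann (sg 0 u * G) = Ann G"
proof -
  have "sg 0 u * X = 0 \<longleftrightarrow> X = (0 :: ('n, 'a) mpoly)" for X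
  proof
    assume "sg 0 u * X = 0"
    then have "u * lk X k = 0" for k by (metis lookup_sc lookup_zero)
    then show "X = 0" using assms by (auto intro: poly_mapping_eqI)
  qed simp
  then show ?thesis unfolding Ann_def act_sc_right by simp
qed

theorem SLP_elem_sym:
  assumes "d \<le> card (UNIV :: 'n::finite set)"
  shows "SLP_quot (Ann (elem_sym d :: ('n, 'a::field_char_0) mpoly))"
proof -
  have "act (lin ^ (card (UNIV :: 'n set) - d)) (elem_sym (card (UNIV :: 'n set)) :: ('n, 'a) mpoly) =
      sg 0 (of_nat (fact (card (UNIV :: 'n set) - d))) * elem_sym d"
  proof -
    have "act (lin ^ (card (UNIV :: 'n set) - d)) (elem_sym (card (UNIV :: 'n set)) :: ('n, 'a) mpoly) =
      sg 0 (of_nat (fact (card (UNIV :: 'n set) - d))) * elem_sym (card (UNIV :: 'n set) - (card (UNIV :: 'n set) - d))"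
      by (rule act_pow_elem_sym) simp
    moreover have "card (UNIV :: 'n set) - (card (UNIV :: 'n set) - d) = d" using assms by simp
    ultimately show ?thesis by simp
  qed
  then have "Ann (elem_sym d :: ('n, 'a) mpoly) = Ann (act (lin ^ (card (UNIV :: 'n set) - d)) (monom (ind UNIV)))"
    by (simp del: single_of_nat add: Ann_sc elem_sym_top)
  then show ?thesis using SLP_main by simp
qed


theorem mainTheorem5:
  shows "(\<forall>(b::'n \<Rightarrow>\<^sub>0 nat) (d::nat).
            SLP_quot (Ann (act ((\<Sum>i\<in>UNIV. var i :: ('n, 'a::field_char_0) mpoly) ^ d) (monom b))))
       \<and> (\<forall>d\<le>card (UNIV :: 'n::finite set). SLP_quot (Ann (elem_sym d :: ('n, 'a::field_char_0) mpoly)))"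
  using SLP_main[where 'a='a and 'n='n] SLP_elem_sym[where 'a='a and 'n='n] unfolding lin_def by blast

end
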